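(* Consider the translation and rotation invariant model described in the context, fix $\beta>0$, and let $\widehat{B}:(-\pi,\pi]^d\to(0,+\infty]$ be a continuous function such that (i) $\int_{(-\pi,\pi]^d}\widehat{B}(p)\,dp<\infty$ and (ii) $\widehat{D}^\Lambda_p\le\widehat{B}(p)$ for all $p\in\Lambda_*\setminus\{0\}$ and all boxes $\Lambda$. For a box $\Lambda$ and $\ell,\ell'\in\Lambda$ put $B^\Lambda_{\ell\ell'}=|\Lambda|^{-1}\sum_{p\in\Lambda_*\setminus\{0\}}\widehat{B}(p)\cos(p,\ell-\ell')$. Then for every box $\Lambda$ and all $\ell,\ell'\in\Lambda$, $$D^\Lambda_{\ell\ell'}\ge\big(D^\Lambda_{\ell\ell}-B^\Lambda_{\ell\ell}\big)+B^\Lambda_{\ell\ell'}.$$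
   Context: Model. $d,\nu\ge1$, $m>0$, $a>0$. Interaction: $J_{\ell\ell'}=\phi(|\ell_1-\ell'_1|,\dots,|\ell_d-\ell'_d|)$ with $\phi:\mathbb{N}_0^d\to[0,\infty)$, $\phi(0)=0$, $\sum_{\ell'}J_{\ell\ell'}<\infty$. Anharmonic potential $V:\mathbb{R}^\nu\to\mathbb{R}$, the same at all sites, continuous, with $V(Ux)=V(x)$ for all $U\in O(\nu)$ and $V(x)\ge A_V|x|^{2r}+B_V$ ($r>1$, $A_V>0$). $C_\beta$: continuous $\omega:[0,\beta]\to\mathbb{R}^\nu$ with $\omega(0)=\omega(\beta)$; $L^2_\beta=L^2([0,\beta]\to\mathbb{R}^\nu)$. $\chi$: centered Gaussian measure on $C_\beta$ with covariance $A^{-1}$, $A=(-m\frac{d^2}{d\tau^2}+a)\otimes\mathbf{I}$ with periodic boundary conditions; $\chi_\Lambda=\bigotimes_{\ell\in\Lambda}\chi$. Boxes: $\Lambda=\Lambda_L=(-L,L]^d\cap\mathbb{Z}^d$, regarded as a discrete torus of side $2L$; $J^\Lambda_{\ell\ell'}=\phi$ evaluated at the coordinatewise torus distances of $\ell,\ell'$. Periodic measure: $\nu^{\rm per}_\Lambda(d\omega_\Lambda)\propto\exp\big[\frac12\sum_{\ell,\ell'\in\Lambda}J^\Lambda_{\ell\ell'}(\omega_\ell,\omega_{\ell'})_{L^2_\beta}-\sum_{\ell\in\Lambda}\int_0^\beta V(\omega_\ell(\tau))d\tau\big]\chi_\Lambda(d\omega_\Lambda)$ (normalized to a probability). $D^\Lambda_{\ell\ell'}=\beta\int_0^\beta\langle(\omega_\ell(\tau),\omega_{\ell'}(\tau'))\rangle_{\nu^{\rm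 per}_\Lambda}d\tau'$ (independent of $\tau$). $\Lambda_*=\{p\in\mathbb{R}^d:p_j=-\pi+\frac{\pi}{L}s_j,\ s_j=1,\dots,2L\}$ and $\widehat{D}^\Lambda_p=\sum_{\ell'\in\Lambda}D^\Lambda_{\ell\ell'}e^{i(p,\ell'-\ell)}$ (independent of $\ell$). *)

theory Defs
  imports "HOL-Probability.Probability"
begin

definition Cper :: "real \<Rightarrow> (real \<Rightarrow> real^'v) set" where
  "Cper \<beta> = {\<omega>. continuous_on {0..\<beta>} \<omega> \<and> \<omega> 0 = \<omega> \<beta>}"

text \<open>C_beta with the sigma-algebra generated by the evaluations omega |-> omega(tau), tau in [0,beta]
  (trace of the cylinder sigma-algebra; equals the Borel sigma-algebra of the sup-norm topology).\<close>
definition path_space :: "real \<Rightarrow> (real \<Rightarrow> real^'v) measure" where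
  "path_space \<beta> = restrict_space (PiM {0..\<beta>} (\<lambda>_. borel)) (Cper \<beta>)"

text \<open>Integral kernel of A^{-1}, A = -m d^2/dtau^2 + a on [0,beta] with periodic boundary
  conditions, via its eigen-expansion (eigenfunctions exp(2 pi i k tau/beta)/sqrt beta,
  eigenvalues m (2 pi k/beta)^2 + a, k in Z).\<close>
definition greenK :: "real \<Rightarrow> real \<Rightarrow> real \<Rightarrow> real \<Rightarrow> real \<Rightarrow> real" where
  "greenK m a \<beta> t s = (1/\<beta>) * (1/a + 2 * (\<Sum>k. cos (2*pi*real (Suc k)*(t - s)/\<beta>)
        / (m * (2*pi*real (Suc k)/\<beta>)^2 + a)))"

text \<open>chi is the centered Gaussian probability measure on C_beta with covariance A^{-1} (times the
  identity on R^nu): characterised by its characteristic functional on finite-dimensional projections.\<close>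
definition periodic_gaussian :: "(real \<Rightarrow> real^'v) measure \<Rightarrow> real \<Rightarrow> real \<Rightarrow> real \<Rightarrow> bool" where
  "periodic_gaussian \<chi>\<^sub>0 m a \<beta> \<longleftrightarrow>
     prob_space \<chi>\<^sub>0 \<and> sets \<chi>\<^sub>0 = sets (path_space \<beta>) \<and>
     (\<forall>(n::nat) (ts::nat \<Rightarrow> real) (vs::nat \<Rightarrow> real^'v). (\<forall>k<n. ts k \<in> {0..\<beta>}) \<longrightarrow>
        integral\<^sup>L \<chi>\<^sub>0 (\<lambda>\<omega>. cis (\<Sum>k<n. \<omega> (ts k) \<bullet> vs k))
        = complex_of_real (exp (- (\<Sum>k<n. \<Sum>l<n. greenK m a \<beta> (ts k) (ts l) * (vs k \<bullet> vs l)) / 2)))"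

definition lbox :: "nat \<Rightarrow> (int^'d) set" where
  "lbox L = {l. \<forall>j. - int L < l$j \<and> l$j \<le> int L}"

definition tdist :: "nat \<Rightarrow> int \<Rightarrow> int \<Rightarrow> nat" where
  "tdist L x y = (let r = (x - y) mod (2 * int L) in nat (min r (2 * int L - r)))"

definition Jper :: "(nat^'d \<Rightarrow> real) \<Rightarrow> nat \<Rightarrow> int^'d \<Rightarrow> int^'d \<Rightarrow> real" where
  "Jper \<phi> L l l' = \<phi> (\<chi> j. tdist L (l$j) (l'$j))"

definition ipL2 :: "real \<Rightarrow> (real \<Rightarrow> real^'v) \<Rightarrow> (real \<Rightarrow> real^'v) \<Rightarrow> real" where
  "ipL2 \<beta> \<omega> \<omega>' = integral {0..\<beta>} (\<lambda>\<tau>. \<omega> \<tau> \<bullet> \<omega>' \<tau>)"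

definition Wper :: "(nat^'d \<Rightarrow> real) \<Rightarrow> (real^'v \<Rightarrow> real) \<Rightarrow> real \<Rightarrow> nat
     \<Rightarrow> (int^'d \<Rightarrow> real \<Rightarrow> real^'v) \<Rightarrow> real" where
  "Wper \<phi> V \<beta> L \<omega> = (1/2) * (\<Sum>l\<in>lbox L. \<Sum>l'\<in>lbox L. Jper \<phi> L l l' * ipL2 \<beta> (\<omega> l) (\<omega> l'))
      - (\<Sum>l\<in>lbox L. integral {0..\<beta>} (\<lambda>\<tau>. V (\<omega> l \<tau>)))"

definition chiL :: "(real \<Rightarrow> real^'v) measure \<Rightarrow> nat \<Rightarrow> (int^'d \<Rightarrow> real \<Rightarrow> real^'v) measure" where
  "chiL \<chi>\<^sub>0 L = PiM (lbox L) (\<lambda>_. \<chi>\<^sub>0)"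

definition nuper :: "(real \<Rightarrow> real^'v) measure \<Rightarrow> (nat^'d \<Rightarrow> real) \<Rightarrow> (real^'v \<Rightarrow> real) \<Rightarrow> real \<Rightarrow> nat
     \<Rightarrow> (int^'d \<Rightarrow> real \<Rightarrow> real^'v) measure" where
  "nuper \<chi>\<^sub>0 \<phi> V \<beta> L = density (chiL \<chi>\<^sub>0 L)
      (\<lambda>\<omega>. ennreal (exp (Wper \<phi> V \<beta> L \<omega>) / integral\<^sup>L (chiL \<chi>\<^sub>0 L) (\<lambda>\<omega>'. exp (Wper \<phi> V \<beta> L \<omega>'))))"

text \<open>D^Lambda_{l l'} (taken at tau = 0; it is independent of tau).\<close>
definition Dmat :: "(real \<Rightarrow> real^'v) measure \<Rightarrow> (nat^'d \<Rightarrow> real) \<Rightarrow> (real^'v \<Rightarrow> real) \<Rightarrow> real \<Rightarrow> nat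
     \<Rightarrow> int^'d \<Rightarrow> int^'d \<Rightarrow> real" where
  "Dmat \<chi>\<^sub>0 \<phi> V \<beta> L l l' =
     \<beta> * integral {0..\<beta>} (\<lambda>\<tau>'. integral\<^sup>L (nuper \<chi>\<^sub>0 \<phi> V \<beta> L) (\<lambda>\<omega>. \<omega> l 0 \<bullet> \<omega> l' \<tau>'))"

definition dual :: "nat \<Rightarrow> (real^'d) set" where
  "dual L = {p. \<forall>j. \<exists>s::nat. 1 \<le> s \<and> s \<le> 2 * L \<and> p$j = - pi + pi / real L * real s}"

definition pdot :: "real^'d \<Rightarrow> int^'d \<Rightarrow> real" where
  "pdot p l = (\<Sum>j\<in>UNIV. p$j * real_of_int (l$j))"

text \<open>hat D^Lambda_p, computed with l = 0 (it is independent of l).\<close>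
definition Dhat :: "(real \<Rightarrow> real^'v) measure \<Rightarrow> (nat^'d \<Rightarrow> real) \<Rightarrow> (real^'v \<Rightarrow> real) \<Rightarrow> real \<Rightarrow> nat
     \<Rightarrow> real^'d \<Rightarrow> complex" where
  "Dhat \<chi>\<^sub>0 \<phi> V \<beta> L p = (\<Sum>l'\<in>lbox L. complex_of_real (Dmat \<chi>\<^sub>0 \<phi> V \<beta> L 0 l') * cis (pdot p l'))"

definition cube :: "(real^'d) set" where
  "cube = {p. \<forall>j. - pi < p$j \<and> p$j \<le> pi}"

definition Bmat :: "(real^'d \<Rightarrow> ennreal) \<Rightarrow> nat \<Rightarrow> int^'d \<Rightarrow> int^'d \<Rightarrow> real" where
  "Bmat Bh L l l' = (1 / real (card (lbox L :: (int^'d) set))) *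
      (\<Sum>p\<in>dual L - {0}. enn2real (Bh p) * cos (pdot p (l - l')))"

end

theory Submission
  imports Defs
begin


lemma nn_inv_le:
  assumes T: "T \<in> measurable M M" and S: "S \<in> measurable M M"
    and TS: "\<And>x. x \<in> space M \<Longrightarrow> T (S x) = x" and ST: "\<And>x. x \<in> space M \<Longrightarrow> S (T x) = x"
    and D: "distr M M T = M"
  shows "(\<integral>\<^sup>+x. g (T x) \<partial>M) \<le> integral\<^sup>N M g"
  unfolding nn_integral_def[of M "\<lambda>x. g (T x)"]
proof (rule SUP_least)
  fix \<phi> assume "\<phi> \<in> {h. simple_function M h \<and> h \<le> (\<lambda>x. g (T x))}"
  then have sf: "simple_function M \<phi>" and le: "\<And>x. \<phi> x \<le> g (T x)" by (auto simp: le_fun_def)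
  have phim: "\<phi> \<in> borel_measurable M" using sf by (rule borel_measurable_simple_function)
  define \<psi> where "\<psi> x = \<phi> (S x) * indicator (space M) x" for x
  have psim: "\<psi> \<in> borel_measurable M" unfolding \<psi>_def
    using measurable_comp[OF S phim] by (intro borel_measurable_times_ennreal) (auto simp: comp_def)
  have "integral\<^sup>S M \<phi> = integral\<^sup>N M \<phi>" using nn_integral_eq_simple_integral[OF sf] by simp
  also have "\<dots> = (\<integral>\<^sup>+x. \<psi> (T x) \<partial>M)"
    apply (rule nn_integral_cong) using ST measurable_space[OF T] by (auto simp: \<psi>_def)
  also have "\<dots> = (\<integral>\<^sup>+x. \<psi> x \<partial>distr M M T)"
    using nn_integral_distr[OF T, of \<psi>] psim by simp
  also have "\<dots> = integral\<^sup>N M \<psi>" using D by simp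
  also have "\<dots> \<le> integral\<^sup>N M g"
    apply (rule nn_integral_mono) using le TS measurable_space[OF S] by (metis \<psi>_def indicator_simps(1) mult.right_neutral)
  finally show "integral\<^sup>S M \<phi> \<le> integral\<^sup>N M g" .
qed

lemma nn_inv_eq:
  assumes T: "T \<in> measurable M M" and S: "S \<in> measurable M M"
    and TS: "\<And>x. x \<in> space M \<Longrightarrow> T (S x) = x" and ST: "\<And>x. x \<in> space M \<Longrightarrow> S (T x) = x"
    and D: "distr M M T = M" and D2: "distr M M S = M"
  shows "(\<integral>\<^sup>+x. g (T x) \<partial>M) = integral\<^sup>N M g"
proof (rule antisym)
  show "(\<integral>\<^sup>+x. g (T x) \<partial>M) \<le> integral\<^sup>N M g" by (rule nn_inv_le[OF T S TS ST D])
  have "integral\<^sup>N M g = (\<integral>\<^sup>+x. g (T (S x)) \<partial>M)" by (rule nn_integral_cong) (simp add: TS)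
  also have "\<dots> \<le> (\<integral>\<^sup>+x. g (T x) \<partial>M)" by (rule nn_inv_le[OF S T ST TS D2])
  finally show "integral\<^sup>N M g \<le> (\<integral>\<^sup>+x. g (T x) \<partial>M)" .
qed

lemma density_inv:
  assumes T: "T \<in> measurable M M" and S: "S \<in> measurable M M"
    and TS: "\<And>x. x \<in> space M \<Longrightarrow> T (S x) = x" and ST: "\<And>x. x \<in> space M \<Longrightarrow> S (T x) = x"
    and D: "distr M M T = M" and D2: "distr M M S = M"
    and f: "\<And>x. x \<in> space M \<Longrightarrow> f (T x) = f x"
  shows "distr (density M f) (density M f) T = density M f"
proof (rule measure_eqI)
  show "sets (distr (density M f) (density M f) T) = sets (density M f)" by simp
  fix A assume A: "A \<in> sets (distr (density M f) (density M f) T)"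
  then have A': "A \<in> sets M" by simp
  have B: "T -` A \<inter> space M \<in> sets M" using T A' by (simp add: measurable_sets)
  define \<mu> where "\<mu> = (\<lambda>A. \<integral>\<^sup>+ x. f x * indicator A x \<partial>M)"
  have eqm: "\<mu> (T -` A \<inter> space M) = \<mu> A"
  proof -
    have "\<mu> (T -` A \<inter> space M) = (\<integral>\<^sup>+x. (\<lambda>y. f y * indicator A y) (T x) \<partial>M)"
      unfolding \<mu>_def apply (rule nn_integral_cong) using f by (auto simp: indicator_def)
    also have "\<dots> = \<mu> A" unfolding \<mu>_def by (rule nn_inv_eq[OF T S TS ST D D2])
    finally show ?thesis .
  qed
  have "emeasure (distr (density M f) (density M f) T) A = emeasure (density M f) (T -` A \<inter> space M)"
    using A T by (simp add: emeasure_distr)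
  also have "\<dots> = emeasure (density M f) A"
    unfolding density_def emeasure_measure_of_conv sets.sigma_sets_eq
    using eqm A' B by (simp add: \<mu>_def)
  finally show "emeasure (distr (density M f) (density M f) T) A = emeasure (density M f) A" .
qed



lemma meas_eval:
  assumes s\<chi>: "sets \<chi>\<^sub>0 = sets (path_space \<beta>)" and t: "t \<in> {0..\<beta>}"
  shows "(\<lambda>x::real \<Rightarrow> real^'v. x t) \<in> borel_measurable \<chi>\<^sub>0"
proof -
  have "(\<lambda>x::real \<Rightarrow> real^'v. x t) \<in> borel_measurable (PiM {0..\<beta>} (\<lambda>_. borel))"
    using t by (rule measurable_component_singleton)
  then have "(\<lambda>x::real \<Rightarrow> real^'v. x t) \<in> borel_measurable (path_space \<beta>)"
    unfolding path_space_def by (rule measurable_restrict_space1)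
  then show ?thesis by (simp add: measurable_cong_sets[OF s\<chi> refl])
qed

lemma Wper_perm:
  assumes bij: "bij_betw \<sigma> (lbox L) (lbox L)"
    and J: "\<And>l l'. l\<in>lbox L \<Longrightarrow> l'\<in>lbox L \<Longrightarrow> Jper \<phi> L (\<sigma> l) (\<sigma> l') = Jper \<phi> L l l'"
  shows "Wper \<phi> V \<beta> L (\<lambda>k\<in>lbox L. \<omega> (\<sigma> k)) = Wper \<phi> V \<beta> L \<omega>"
proof -
  have s1: "(\<Sum>l\<in>lbox L. \<Sum>l'\<in>lbox L. Jper \<phi> L l l' * ipL2 \<beta> ((\<lambda>k\<in>lbox L. \<omega> (\<sigma> k)) l) ((\<lambda>k\<in>lbox L. \<omega> (\<sigma> k)) l'))
     = (\<Sum>l\<in>lbox L. \<Sum>l'\<in>lbox L. Jper \<phi> L (\<sigma> l) (\<sigma> l') * ipL2 \<beta> (\<omega> (\<sigma> l)) (\<omega> (\<sigma> l')))"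
    by (intro sum.cong refl) (simp add: J)
  also have "\<dots> = (\<Sum>l\<in>lbox L. \<Sum>l'\<in>lbox L. Jper \<phi> L (\<sigma> l) l' * ipL2 \<beta> (\<omega> (\<sigma> l)) (\<omega> l'))"
    by (intro sum.cong refl sum.reindex_bij_betw[OF bij, where g = "\<lambda>l'. Jper \<phi> L (\<sigma> _) l' * ipL2 \<beta> (\<omega> (\<sigma> _)) (\<omega> l')"])
  also have "\<dots> = (\<Sum>l\<in>lbox L. \<Sum>l'\<in>lbox L. Jper \<phi> L l l' * ipL2 \<beta> (\<omega> l) (\<omega> l'))"
    by (rule sum.reindex_bij_betw[OF bij, where g = "\<lambda>l. \<Sum>l'\<in>lbox L. Jper \<phi> L l l' * ipL2 \<beta> (\<omega> l) (\<omega> l')"])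
  finally have s1: "(\<Sum>l\<in>lbox L. \<Sum>l'\<in>lbox L. Jper \<phi> L l l' * ipL2 \<beta> ((\<lambda>k\<in>lbox L. \<omega> (\<sigma> k)) l) ((\<lambda>k\<in>lbox L. \<omega> (\<sigma> k)) l')) = (\<Sum>l\<in>lbox L. \<Sum>l'\<in>lbox L. Jper \<phi> L l l' * ipL2 \<beta> (\<omega> l) (\<omega> l'))" .
  have s2: "(\<Sum>l\<in>lbox L. integral {0..\<beta>} (\<lambda>\<tau>. V ((\<lambda>k\<in>lbox L. \<omega> (\<sigma> k)) l \<tau>)))
      = (\<Sum>l\<in>lbox L. integral {0..\<beta>} (\<lambda>\<tau>. V (\<omega> l \<tau>)))"
  proof -
    have "(\<Sum>l\<in>lbox L. integral {0..\<beta>} (\<lambda>\<tau>. V ((\<lambda>k\<in>lbox L. \<omega> (\<sigma> k)) l \<tau>)))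
        = (\<Sum>l\<in>lbox L. integral {0..\<beta>} (\<lambda>\<tau>. V (\<omega> (\<sigma> l) \<tau>)))" by (intro sum.cong) auto
    also have "\<dots> = (\<Sum>l\<in>lbox L. integral {0..\<beta>} (\<lambda>\<tau>. V (\<omega> l \<tau>)))"
      by (rule sum.reindex_bij_betw[OF bij, where g = "\<lambda>l. integral {0..\<beta>} (\<lambda>\<tau>. V (\<omega> l \<tau>))"])
    finally show ?thesis .
  qed
  show ?thesis unfolding Wper_def s1 s2 ..
qed

lemma Dmat_perm:
  fixes \<sigma> :: "int^'d \<Rightarrow> int^'d" and \<chi>\<^sub>0 :: "(real \<Rightarrow> real^'v) measure"
  assumes p\<chi>: "prob_space \<chi>\<^sub>0" and s\<chi>: "sets \<chi>\<^sub>0 = sets (path_space \<beta>)"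
    and bij: "bij_betw \<sigma> (lbox L) (lbox L)"
    and J: "\<And>l l'. l\<in>lbox L \<Longrightarrow> l'\<in>lbox L \<Longrightarrow> Jper \<phi> L (\<sigma> l) (\<sigma> l') = Jper \<phi> L l l'"
    and l: "l \<in> lbox L" "l' \<in> lbox L"
  shows "Dmat \<chi>\<^sub>0 \<phi> V \<beta> L (\<sigma> l) (\<sigma> l') = Dmat \<chi>\<^sub>0 \<phi> V \<beta> L l l'"
proof -
  define M where "M = (chiL \<chi>\<^sub>0 L :: (int^'d \<Rightarrow> real \<Rightarrow> real^'v) measure)"
  define T where "T \<rho> \<omega> = (\<lambda>k\<in>lbox L. \<omega> (\<rho> k))" for \<rho> :: "int^'d \<Rightarrow> int^'d" and \<omega> :: "int^'d \<Rightarrow> real \<Rightarrow> real^'v"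
  define \<sigma>' where "\<sigma>' = inv_into (lbox L) \<sigma>"
  have bij': "bij_betw \<sigma>' (lbox L) (lbox L)" unfolding \<sigma>'_def by (rule bij_betw_inv_into[OF bij])
  have Tm: "T \<rho> \<in> measurable M M" if "bij_betw \<rho> (lbox L) (lbox L)" for \<rho>
    unfolding T_def M_def chiL_def
    apply (rule measurable_restrict)
    apply (rule measurable_component_singleton)
    using that by (auto dest: bij_betwE)
  have Td: "distr M M (T \<rho>) = M" if "bij_betw \<rho> (lbox L) (lbox L)" for \<rho>
    unfolding T_def M_def chiL_def
    using distr_PiM_reindex[of "lbox L" "\<lambda>_. \<chi>\<^sub>0" \<rho> "lbox L"] p\<chi> that
    by (auto simp: bij_betw_def)
  have inv1: "\<sigma> (\<sigma>' k) = k" if "k \<in> lbox L" for k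
    unfolding \<sigma>'_def using that bij by (simp add: bij_betw_inv_into_right)
  have inv2: "\<sigma>' (\<sigma> k) = k" if "k \<in> lbox L" for k
    unfolding \<sigma>'_def using that bij by (simp add: bij_betw_inv_into_left)
  have sp: "space M = PiE (lbox L) (\<lambda>_. space \<chi>\<^sub>0)" unfolding M_def chiL_def by (simp add: space_PiM)
  have TS: "T \<sigma> (T \<sigma>' x) = x" if "x \<in> space M" for x
    using that bij inv2 unfolding sp  T_def
    by (auto simp: fun_eq_iff PiE_def extensional_def dest: bij_betwE)
  have ST: "T \<sigma>' (T \<sigma> x) = x" if "x \<in> space M" for x
    using that bij' inv1 unfolding sp T_def
    by (auto simp: fun_eq_iff PiE_def extensional_def dest: bij_betwE)
  define f where "f \<omega> = ennreal (exp (Wper \<phi> V \<beta> L \<omega>) / integral\<^sup>L M (\<lambda>\<omega>'. exp (Wper \<phi> V \<beta> L \<omega>')))" for \<omega>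
  have nu: "nuper \<chi>\<^sub>0 \<phi> V \<beta> L = density M f" unfolding nuper_def f_def M_def ..
  have fT: "f (T \<sigma> x) = f x" for x unfolding f_def T_def by (simp only: Wper_perm[OF bij J])
  have Dn: "distr (density M f) (density M f) (T \<sigma>) = density M f"
    apply (rule density_inv[OF Tm[OF bij] Tm[OF bij']])
    apply (erule TS)
    apply (erule ST)
    apply (rule Td[OF bij])
    apply (rule Td[OF bij'])
    apply (rule fT)
    done
  have "Dmat \<chi>\<^sub>0 \<phi> V \<beta> L (\<sigma> l) (\<sigma> l') = \<beta> * integral {0..\<beta>} (\<lambda>\<tau>'. integral\<^sup>L (density M f) (\<lambda>\<omega>. \<omega> (\<sigma> l) 0 \<bullet> \<omega> (\<sigma> l') \<tau>'))"
    unfolding Dmat_def nu ..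
  also have "\<dots> = \<beta> * integral {0..\<beta>} (\<lambda>\<tau>'. integral\<^sup>L (density M f) (\<lambda>\<omega>. \<omega> l 0 \<bullet> \<omega> l' \<tau>'))"
  proof -
  have key: "integral\<^sup>L (density M f) (\<lambda>\<omega>. \<omega> (\<sigma> l) 0 \<bullet> \<omega> (\<sigma> l') \<tau>') = integral\<^sup>L (density M f) (\<lambda>\<omega>. \<omega> l 0 \<bullet> \<omega> l' \<tau>')"
    if \<tau>': "\<tau>' \<in> {0..\<beta>}" for \<tau>'
  proof -
    let ?h = "\<lambda>\<omega>::int^'d \<Rightarrow> real \<Rightarrow> real^'v. \<omega> l 0 \<bullet> \<omega> l' \<tau>'"
    have hm: "?h \<in> borel_measurable (density M f)"
    proof -
      have c: "(\<lambda>\<omega>. \<omega> k) \<in> measurable M \<chi>\<^sub>0" if "k \<in> lbox L" for k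
        unfolding M_def chiL_def using that by (rule measurable_component_singleton)
      have e0: "(\<lambda>x::real \<Rightarrow> real^'v. x 0) \<in> borel_measurable \<chi>\<^sub>0"
        using \<tau>' by (intro meas_eval[OF s\<chi>]) auto
      have e1: "(\<lambda>x::real \<Rightarrow> real^'v. x \<tau>') \<in> borel_measurable \<chi>\<^sub>0"
        using \<tau>' by (intro meas_eval[OF s\<chi>]) auto
      have "?h \<in> borel_measurable M"
        using measurable_comp[OF c[OF l(1)] e0] measurable_comp[OF c[OF l(2)] e1]
        by (intro borel_measurable_inner) (auto simp: comp_def)
      then show ?thesis by simp
    qed
    have "integral\<^sup>L (density M f) (\<lambda>\<omega>. \<omega> (\<sigma> l) 0 \<bullet> \<omega> (\<sigma> l') \<tau>') = integral\<^sup>L (density M f) (\<lambda>\<omega>. ?h (T \<sigma> \<omega>))"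
      using l by (simp add: T_def)
    also have "\<dots> = integral\<^sup>L (distr (density M f) (density M f) (T \<sigma>)) ?h"
      by (rule integral_distr[symmetric]) (use Tm[OF bij] hm in auto)
    also have "\<dots> = integral\<^sup>L (density M f) ?h" unfolding Dn ..
    finally show "integral\<^sup>L (density M f) (\<lambda>\<omega>. \<omega> (\<sigma> l) 0 \<bullet> \<omega> (\<sigma> l') \<tau>') = integral\<^sup>L (density M f) ?h" .
  qed
  have "integral {0..\<beta>} (\<lambda>\<tau>'. integral\<^sup>L (density M f) (\<lambda>\<omega>. \<omega> (\<sigma> l) 0 \<bullet> \<omega> (\<sigma> l') \<tau>')) = integral {0..\<beta>} (\<lambda>\<tau>'. integral\<^sup>L (density M f) (\<lambda>\<omega>. \<omega> l 0 \<bullet> \<omega> l' \<tau>'))"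
    by (rule integral_cong) (rule key)
  then show ?thesis by simp
  qed
  also have "\<dots> = Dmat \<chi>\<^sub>0 \<phi> V \<beta> L l l'" unfolding Dmat_def nu ..
  finally show ?thesis .
qed



definition red :: "nat \<Rightarrow> int \<Rightarrow> int" where
  "red L x = (x + int L - 1) mod (2 * int L) - int L + 1"

definition shv :: "nat \<Rightarrow> int^'d \<Rightarrow> int^'d \<Rightarrow> int^'d" where
  "shv L a l = (\<chi> j. red L (l$j + a$j))"

definition refv :: "nat \<Rightarrow> int^'d \<Rightarrow> int^'d" where
  "refv L l = (\<chi> j. red L (- l$j))"

lemma red_eq: "red L x = x - 2 * int L * ((x + int L - 1) div (2 * int L))"
  unfolding red_def by (simp add: minus_div_mult_eq_mod [symmetric] algebra_simps)

lemma red_range: assumes "L \<ge> 1" shows "- int L < red L x \<and> red L x \<le> int L"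
proof -
  have "0 \<le> (x + int L - 1) mod (2 * int L)" "(x + int L - 1) mod (2 * int L) < 2 * int L"
    using assms by auto
  then show ?thesis unfolding red_def by linarith
qed

lemma red_mod: "red L x mod (2 * int L) = x mod (2 * int L)"
proof -
  have "red L x = x + (- ((x + int L - 1) div (2 * int L))) * (2 * int L)" by (simp add: red_eq algebra_simps)
  then show ?thesis by (simp only: mod_mult_self1)
qed

lemma red_cong: assumes "x mod (2 * int L) = y mod (2 * int L)" shows "red L x = red L y"
proof -
  have "(x + (int L - 1)) mod (2 * int L) = (y + (int L - 1)) mod (2 * int L)"
    using assms by (rule mod_add_cong) simp
  then show ?thesis unfolding red_def by (simp add: algebra_simps)
qed

lemma red_id: assumes "- int L < x" "x \<le> int L" shows "red L x = x"
proof -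
  have "(x + int L - 1) mod (2 * int L) = x + int L - 1"
    using assms by (intro mod_pos_pos_trivial) auto
  then show ?thesis unfolding red_def by simp
qed

lemma lbox_iff: "l \<in> lbox L \<longleftrightarrow> (\<forall>j. - int L < l$j \<and> l$j \<le> int L)"
  unfolding lbox_def by simp

lemma shv_in: "L \<ge> 1 \<Longrightarrow> shv L a l \<in> lbox L"
  unfolding lbox_iff shv_def using red_range by simp

lemma refv_in: "L \<ge> 1 \<Longrightarrow> refv L l \<in> lbox L"
  unfolding lbox_iff refv_def using red_range by simp

lemma shv_inv: assumes "l \<in> lbox L" shows "shv L (-a) (shv L a l) = l"
proof -
  have "red L (red L (l$j + a$j) + - a$j) = l$j" for j
  proof -
    have "red L (red L (l$j + a$j) + - a$j) = red L (l$j)"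
    proof (rule red_cong)
      have "(red L (l$j+a$j) + - a$j) mod (2*int L) = ((l$j+a$j) + - a$j) mod (2*int L)"
        by (rule mod_add_cong) (simp_all add: red_mod)
      then show "(red L (l$j+a$j) + - a$j) mod (2*int L) = l$j mod (2*int L)" by simp
    qed
    also have "\<dots> = l$j" using assms unfolding lbox_iff by (intro red_id) auto
    finally show ?thesis .
  qed
  then show ?thesis unfolding shv_def by (simp add: vec_eq_iff)
qed

lemma refv_inv: assumes "l \<in> lbox L" shows "refv L (refv L l) = l"
proof -
  have "red L (- red L (- l$j)) = l$j" for j
  proof -
    have "red L (- red L (- l$j)) = red L (l$j)"
      apply (rule red_cong)
      using red_mod[of L "- l$j"] by (metis minus_minus mod_minus_cong)
    also have "\<dots> = l$j" using assms unfolding lbox_iff by (intro red_id) auto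
    finally show ?thesis .
  qed
  then show ?thesis unfolding refv_def by (simp add: vec_eq_iff)
qed

lemma bij_shv: "L \<ge> 1 \<Longrightarrow> bij_betw (shv L a) (lbox L) (lbox L)"
  using shv_inv[of _ L "-a"] by (intro bij_betw_byWitness[where f'="shv L (-a)"]) (auto simp: shv_inv shv_in)

lemma bij_refv: "L \<ge> 1 \<Longrightarrow> bij_betw (refv L) (lbox L) (lbox L)"
  by (rule bij_betw_byWitness[where f'="refv L"]) (auto simp: refv_inv refv_in)

lemma tdist_cong: assumes "(x - y) mod (2 * int L) = (x' - y') mod (2 * int L)"
  shows "tdist L x y = tdist L x' y'"
  unfolding tdist_def using assms by simp

lemma tdist_neg: "tdist L (- x) (- y) = tdist L x y"
proof -
  have e: "(y - x) mod (2 * int L) = (if (x - y) mod (2 * int L) = 0 then 0 else 2 * int L - (x - y) mod (2 * int L))"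
    by (metis minus_diff_eq zmod_zminus1_eq_if)
  show ?thesis unfolding tdist_def Let_def using e by (auto simp: min_def)
qed

lemma Jper_shv: assumes "L \<ge> 1" shows "Jper \<phi> L (shv L a l) (shv L a l') = Jper \<phi> L l l'"
proof -
  have "tdist L (red L (l$j + a$j)) (red L (l'$j + a$j)) = tdist L (l$j) (l'$j)" for j
  proof (rule tdist_cong)
    have "(red L (l$j + a$j) - red L (l'$j + a$j)) mod (2 * int L) = ((l$j + a$j) - (l'$j + a$j)) mod (2 * int L)"
      by (rule mod_diff_cong) (simp_all add: red_mod)
    then show "(red L (l$j + a$j) - red L (l'$j + a$j)) mod (2 * int L) = (l$j - l'$j) mod (2 * int L)" by simp
  qed
  then show ?thesis unfolding Jper_def shv_def by simp
qed

lemma Jper_refv: assumes "L \<ge> 1" shows "Jper \<phi> L (refv L l) (refv L l') = Jper \<phi> L l l'"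
proof -
  have "tdist L (red L (- l$j)) (red L (- l'$j)) = tdist L (l$j) (l'$j)" for j
  proof -
    have "tdist L (red L (- l$j)) (red L (- l'$j)) = tdist L (- l$j) (- l'$j)"
    proof (rule tdist_cong)
      show "(red L (- l$j) - red L (- l'$j)) mod (2 * int L) = (- l$j - - l'$j) mod (2 * int L)"
        by (rule mod_diff_cong) (simp_all add: red_mod)
    qed
    then show ?thesis by (simp add: tdist_neg)
  qed
  then show ?thesis unfolding Jper_def refv_def by simp
qed



lemma vec_set_eq: "{p::'a^'d. \<forall>j. p$j \<in> A} = vec_lambda ` (PiE UNIV (\<lambda>_. A))"
proof (intro set_eqI iffI)
  fix p :: "'a^'d" assume "p \<in> {p. \<forall>j. p$j \<in> A}"
  then have "vec_nth p \<in> PiE UNIV (\<lambda>_. A)" by auto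
  moreover have "p = vec_lambda (vec_nth p)" by simp
  ultimately show "p \<in> vec_lambda ` (PiE UNIV (\<lambda>_. A))" by blast
qed auto

lemma vec_sum_prod:
  fixes F :: "'d::finite \<Rightarrow> 'a \<Rightarrow> 'c::comm_semiring_1"
  assumes "finite A"
  shows "(\<Sum>p\<in>{p::'a^'d. \<forall>j. p$j \<in> A}. \<Prod>j\<in>UNIV. F j (p$j)) = (\<Prod>j\<in>UNIV. \<Sum>a\<in>A. F j a)"
proof -
  have inj: "inj_on vec_lambda (PiE UNIV (\<lambda>_::'d. A))"
    by (intro inj_onI) (metis vec_lambda_inverse UNIV_I)
  have "(\<Sum>p\<in>{p::'a^'d. \<forall>j. p$j \<in> A}. \<Prod>j\<in>UNIV. F j (p$j))
      = (\<Sum>g\<in>PiE UNIV (\<lambda>_. A). \<Prod>j\<in>UNIV. F j (g j))"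
    unfolding vec_set_eq by (subst sum.reindex[OF inj]) simp
  also have "\<dots> = (\<Prod>j\<in>UNIV. \<Sum>a\<in>A. F j a)"
    by (rule prod_sum_PiE[symmetric]) (use assms in auto)
  finally show ?thesis .
qed

lemma card_vecset:
  assumes "finite A"
  shows "card {p::'a^'d::finite. \<forall>j. p$j \<in> A} = card A ^ CARD('d)"
  using vec_sum_prod[OF assms, of "\<lambda>_ _. 1::nat"] by simp

lemma cis_sum_fin: "finite A \<Longrightarrow> cis (\<Sum>a\<in>A. f a) = (\<Prod>a\<in>A. cis (f a))"
  by (induction A rule: finite_induct) (simp_all add: cis_mult[symmetric])

definition dualset :: "nat \<Rightarrow> real set" where
  "dualset L = (\<lambda>s. - pi + pi / real L * real s) ` {1..2*L}"

lemma dualset_iff: "x \<in> dualset L \<longleftrightarrow> (\<exists>s::nat. 1 \<le> s \<and> s \<le> 2 * L \<and> x = - pi + pi / real L * real s)"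
  unfolding dualset_def by auto

lemma dual_eq: "dual L = {p. \<forall>j. p$j \<in> dualset L}"
  unfolding dual_def dualset_iff ..

lemma lbox_eq: "lbox L = {l. \<forall>j. l$j \<in> {- int L<..int L}}"
  unfolding lbox_def by auto

lemma card_lbox: "card (lbox L :: (int^'d::finite) set) = (2*L)^CARD('d)"
  proof -
  have "nat (2 * int L) = 2 * L" by simp
  then show ?thesis unfolding lbox_eq by (subst card_vecset) auto
qed

lemma finite_lbox: "finite (lbox L :: (int^'d::finite) set)"
proof -
  have "finite (vec_lambda ` (PiE UNIV (\<lambda>_::'d. {- int L<..int L})))"
    by (intro finite_imageI finite_PiE) auto
  then show ?thesis unfolding lbox_eq vec_set_eq .
qed

lemma finite_dual: "finite (dual L :: (real^'d::finite) set)"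
proof -
  have "finite (vec_lambda ` (PiE UNIV (\<lambda>_::'d. dualset L)))"
    by (intro finite_imageI finite_PiE) (auto simp: dualset_def)
  then show ?thesis unfolding dual_eq vec_set_eq .
qed

lemma sum1d:
  assumes L: "L \<ge> 1" and k: "\<bar>k\<bar> < 2 * int L"
  shows "(\<Sum>a\<in>dualset L. cis (a * real_of_int k)) = (if k = 0 then of_nat (2*L) else 0)"
proof -
  have inj: "inj_on (\<lambda>s. - pi + pi / real L * real s) {1..2*L}"
    using L by (intro inj_onI) auto
  define w where "w = cis (pi * real_of_int k / real L)"
  have tm: "cis ((- pi + pi / real L * real s) * real_of_int k) = cis (- pi * real_of_int k) * w ^ s" for s
    unfolding w_def by (simp only: Complex.DeMoivre cis_mult) (rule arg_cong[where f=cis], simp add: field_simps)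
  have "(\<Sum>a\<in>dualset L. cis (a * real_of_int k)) = (\<Sum>s\<in>{1..2*L}. cis ((- pi + pi / real L * real s) * real_of_int k))"
    unfolding dualset_def by (subst sum.reindex[OF inj]) simp
  also have "\<dots> = cis (- pi * real_of_int k) * (\<Sum>s\<in>{1..2*L}. w ^ s)"
    unfolding tm sum_distrib_left ..
  also have "(\<Sum>s\<in>{1..2*L}. w ^ s) = (\<Sum>i<2*L. w ^ Suc i)"
  proof -
    have "(\<Sum>i<2*L. w ^ Suc i) = (\<Sum>i\<in>{0..2*L-1}. w ^ Suc i)"
      using L by (intro sum.cong) auto
    also have "\<dots> = (\<Sum>s\<in>Suc ` {0..2*L-1}. w ^ s)"
    proof -
      have inj: "inj_on Suc {0..2*L-1}" by simp
      show ?thesis by (simp only: sum.reindex[OF inj] comp_def)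
    qed
    also have "Suc ` {0..2*L-1} = {1..2*L}" using L by simp
    finally show ?thesis by simp
  qed
  also have "\<dots> = w * (\<Sum>i<2*L. w ^ i)" by (simp add: sum_distrib_left)
  finally have eq: "(\<Sum>a\<in>dualset L. cis (a * real_of_int k)) = cis (- pi * real_of_int k) * (w * (\<Sum>i<2*L. w ^ i))" .
  show ?thesis
  proof (cases "k = 0")
    case True
    then show ?thesis unfolding eq w_def by simp
  next
    case False
    have wn: "w ^ (2*L) = 1"
    proof -
      have e: "real (2*L) * (pi * real_of_int k / real L) = 2 * pi * real_of_int k" using L by (simp add: field_simps)
      have "w ^ (2*L) = cis (2 * pi * real_of_int k)" unfolding w_def Complex.DeMoivre e ..
      then show ?thesis by simp
    qed
    have w1: "w \<noteq> 1"
    proof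
      assume "w = 1"
      then have "Re w = 1" by simp
      then have "cos (pi * real_of_int k / real L) = 1" unfolding w_def by simp
      then obtain n :: int where n: "pi * real_of_int k / real L = real_of_int n * 2 * pi" by (auto simp: cos_one_2pi_int)
      then have "real_of_int k = real_of_int (n * 2 * int L)" using L by (simp add: field_simps)
      then have kk: "k = n * 2 * int L" by (simp only: of_int_eq_iff)
      show False
      proof (cases "n = 0")
        case True then show False using kk False by simp
      next
        case False
        then have "\<bar>n\<bar> \<ge> 1" by simp
        then have "\<bar>n\<bar> * (2 * int L) \<ge> 1 * (2 * int L)" by (intro mult_right_mono) auto
        then have "\<bar>k\<bar> \<ge> 2 * int L" unfolding kk abs_mult by simp
        then show False using k by simp
      qed
    qed
    have "(\<Sum>i<2*L. w ^ i) = 0" using sum_gp_strict[of w "2*L"] wn w1 by simp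
    then show ?thesis unfolding eq using False by simp
  qed
qed

lemma pdot_diff: "pdot p (y - x) = pdot p y - pdot p x"
  unfolding pdot_def by (simp add: algebra_simps sum_subtractf)

lemma pdot_zero_left: "pdot 0 x = 0" unfolding pdot_def by simp
lemma pdot_zero_right: "pdot p 0 = 0" unfolding pdot_def by simp

lemma orth:
  fixes z :: "int^'d::finite"
  assumes L: "L \<ge> 1" and z: "\<And>j. \<bar>z$j\<bar> < 2 * int L"
  shows "(\<Sum>p\<in>dual L. cis (pdot p z)) = (if z = 0 then of_nat ((2*L)^CARD('d)) else 0)"
proof -
  have "(\<Sum>p\<in>dual L. cis (pdot p z)) = (\<Sum>p\<in>{p. \<forall>j. p$j \<in> dualset L}. \<Prod>j\<in>UNIV. cis (p$j * real_of_int (z$j)))"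
    unfolding dual_eq pdot_def by (simp add: cis_sum_fin)
  also have "\<dots> = (\<Prod>j\<in>UNIV. \<Sum>a\<in>dualset L. cis (a * real_of_int (z$j)))"
    by (rule vec_sum_prod) (simp add: dualset_def)
  also have "\<dots> = (\<Prod>j\<in>UNIV. if z$j = 0 then of_nat (2*L) else 0)"
    using sum1d[OF L z] by simp
  also have "\<dots> = (if z = 0 then of_nat ((2*L)^CARD('d)) else 0)"
  proof (cases "z = 0")
    case True then show ?thesis by simp
  next
    case False
    then obtain j where "z$j \<noteq> 0" by (auto simp: vec_eq_iff)
    then show ?thesis using False by (intro trans[OF prod_zero]) auto
  qed
  finally show ?thesis .
qed

lemma pdot_period:
  fixes v w :: "int^'d::finite"
  assumes L: "L \<ge> 1" and p: "p \<in> dual L" and vw: "\<And>j. (v$j - w$j) mod (2 * int L) = 0"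
  shows "\<exists>n::int. pdot p v = pdot p w + 2 * pi * real_of_int n"
proof -
  have "\<forall>j. \<exists>s::nat. p$j = - pi + pi / real L * real s" using p unfolding dual_def by blast
  then obtain s where s: "\<And>j. p$j = - pi + pi / real L * real (s j)" by (metis choice)
  have "\<forall>j. \<exists>q. v$j - w$j = 2 * int L * q" using vw by (auto simp: mod_eq_0_iff_dvd dvd_def)
  then obtain q where q: "\<And>j. v$j - w$j = 2 * int L * q j" by (metis choice)
  have "pdot p v - pdot p w = (\<Sum>j\<in>UNIV. p$j * real_of_int (v$j - w$j))"
    unfolding pdot_def by (simp add: sum_subtractf algebra_simps)
  also have "\<dots> = (\<Sum>j\<in>UNIV. 2 * pi * real_of_int ((int (s j) - int L) * q j))"
  proof (rule sum.cong[OF refl])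
    fix j
    have "p$j * real_of_int (v$j - w$j) = (- pi + pi / real L * real (s j)) * (2 * real L * real_of_int (q j))"
      unfolding s q by simp
    also have "\<dots> = 2 * pi * ((real (s j) - real L) * real_of_int (q j))" using L by (simp add: field_simps)
    finally show "p$j * real_of_int (v$j - w$j) = 2 * pi * real_of_int ((int (s j) - int L) * q j)" by simp
  qed
  also have "\<dots> = 2 * pi * real_of_int (\<Sum>j\<in>UNIV. (int (s j) - int L) * q j)"
    by (simp add: sum_distrib_left)
  finally show ?thesis by (intro exI[of _ "\<Sum>j\<in>UNIV. (int (s j) - int L) * q j"]) simp
qed



lemma red_zero: "red L 0 = 0"
  by (cases "L = 0") (simp add: red_def, rule red_id, auto)

lemma shv_self: "shv L (-l) l = 0"
  unfolding shv_def by (simp add: red_zero vec_eq_iff)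

lemma refv_zero: "refv L 0 = 0"
  unfolding refv_def by (simp add: red_zero vec_eq_iff)

lemma zero_lbox: "L \<ge> 1 \<Longrightarrow> 0 \<in> lbox L"
  unfolding lbox_iff by simp

lemma red_mod0: "(red L x - x) mod (2 * int L) = 0"
  by (metis mod_diff_cong red_mod diff_self mod_0)

lemma red_mod0': "(red L (- a) + a) mod (2 * int L) = 0"
  using red_mod0[of L "- a"] by simp

lemma main_ineq:
  fixes \<chi>\<^sub>0 :: "(real \<Rightarrow> real^'v) measure" and Bh :: "real^'d \<Rightarrow> ennreal"
    and \<phi> :: "nat^'d \<Rightarrow> real"
  assumes p\<chi>: "prob_space \<chi>\<^sub>0" and s\<chi>: "sets \<chi>\<^sub>0 = sets (path_space \<beta>)"
    and L: "L \<ge> 1"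
    and hyp: "\<forall>p\<in>dual L - {0}. ennreal (Re (Dhat \<chi>\<^sub>0 \<phi> V \<beta> L p)) \<le> Bh p"
    and fin: "\<forall>p\<in>dual L - {0}. Bh p < \<infinity>"
    and l: "l \<in> lbox L" and l': "l' \<in> lbox L"
  shows "Dmat \<chi>\<^sub>0 \<phi> V \<beta> L l l' \<ge> (Dmat \<chi>\<^sub>0 \<phi> V \<beta> L l l - Bmat Bh L l l) + Bmat Bh L l l'"
proof -
  define D where "D = Dmat \<chi>\<^sub>0 \<phi> V \<beta> L"
  define g where "g y = D 0 y" for y
  define N :: nat where "N = (2*L)^CARD('d)"
  have N0: "real N > 0" unfolding N_def using L by simp
  have cardN: "card (lbox L :: (int^'d) set) = N" unfolding N_def by (rule card_lbox)
  have z: "(0::int^'d) \<in> lbox L" using L by (rule zero_lbox)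
  have perm: "D (\<sigma> a) (\<sigma> b) = D a b" if "bij_betw \<sigma> (lbox L) (lbox L)"
    "\<And>l l'. l\<in>lbox L \<Longrightarrow> l'\<in>lbox L \<Longrightarrow> Jper \<phi> L (\<sigma> l) (\<sigma> l') = Jper \<phi> L l l'"
    "a \<in> lbox L" "b \<in> lbox L" for \<sigma> a b
    unfolding D_def by (rule Dmat_perm[OF p\<chi> s\<chi> that])
  define x where "x = shv L (-l) l'"
  have x: "x \<in> lbox L" unfolding x_def using L by (rule shv_in)
  have Dll': "D l l' = g x"
    using perm[OF bij_shv[OF L] Jper_shv[OF L] l l', of "-l"] unfolding g_def x_def shv_self by simp
  have Dll: "D l l = g 0"
    using perm[OF bij_shv[OF L] Jper_shv[OF L] l l, of "-l"] unfolding g_def shv_self by simp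
  have grefl: "g (refv L y) = g y" if "y \<in> lbox L" for y
    using perm[OF bij_refv[OF L] Jper_refv[OF L] z that] unfolding g_def refv_zero by simp
  have Dhat_eq: "Dhat \<chi>\<^sub>0 \<phi> V \<beta> L p = (\<Sum>y\<in>lbox L. complex_of_real (g y) * cis (pdot p y))" for p
    unfolding Dhat_def g_def D_def ..
  have ImD: "Im (Dhat \<chi>\<^sub>0 \<phi> V \<beta> L p) = 0" if p: "p \<in> dual L" for p
  proof -
    define S where "S = (\<Sum>y\<in>lbox L. g y * sin (pdot p y))"
    have ImS: "Im (Dhat \<chi>\<^sub>0 \<phi> V \<beta> L p) = S" unfolding Dhat_eq S_def by (simp add: Im_sum)
    have sinr: "sin (pdot p (refv L y)) = - sin (pdot p y)" for y
    proof -
      have "\<And>j. ((refv L y)$j - (- y)$j) mod (2 * int L) = 0" unfolding refv_def by (simp add: red_mod0')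
      from pdot_period[OF L p this] obtain n :: int where n: "pdot p (refv L y) = pdot p (-y) + 2 * pi * real_of_int n" by blast
      have "pdot p (-y) = - pdot p y" unfolding pdot_def by (simp add: sum_negf)
      then have "sin (pdot p (refv L y)) = sin (- pdot p y)" using n sin_cos_eq_iff by metis
      then show ?thesis by simp
    qed
    have "S = (\<Sum>y\<in>lbox L. g (refv L y) * sin (pdot p (refv L y)))"
      unfolding S_def by (rule sum.reindex_bij_betw[OF bij_refv[OF L], symmetric])
    also have "\<dots> = - S" unfolding S_def sum_negf[symmetric] by (intro sum.cong) (simp_all add: grefl sinr)
    finally have "S = 0" by simp
    then show ?thesis using ImS by simp
  qed
  have inv: "(\<Sum>p\<in>dual L. Re (Dhat \<chi>\<^sub>0 \<phi> V \<beta> L p) * cos (pdot p y)) = real N * g y" if y: "y \<in> lbox L" for y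
  proof -
    have "(\<Sum>p\<in>dual L. Dhat \<chi>\<^sub>0 \<phi> V \<beta> L p * cis (- pdot p y))
        = (\<Sum>p\<in>dual L. \<Sum>u\<in>lbox L. complex_of_real (g u) * cis (pdot p (u - y)))"
      unfolding Dhat_eq sum_distrib_right
      by (intro sum.cong refl) (simp add: mult.assoc cis_mult pdot_diff)
    also have "\<dots> = (\<Sum>u\<in>lbox L. complex_of_real (g u) * (\<Sum>p\<in>dual L. cis (pdot p (u - y))))"
      by (subst sum.swap) (simp add: sum_distrib_left)
    also have "\<dots> = (\<Sum>u\<in>lbox L. complex_of_real (g u) * (if u = y then of_nat N else 0))"
    proof (intro sum.cong refl)
      fix u :: "int^'d" assume u: "u \<in> lbox L"
      have "\<bar>(u - y)$j\<bar> < 2 * int L" for j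
      proof -
        have "- int L < u$j" "u$j \<le> int L" "- int L < y$j" "y$j \<le> int L" using u y unfolding lbox_iff by auto
        then show ?thesis by (simp add: abs_less_iff)
      qed
      then show "complex_of_real (g u) * (\<Sum>p\<in>dual L. cis (pdot p (u - y))) = complex_of_real (g u) * (if u = y then of_nat N else 0)"
        using orth[OF L, of "u - y"] unfolding N_def by simp
    qed
    also have "\<dots> = complex_of_real (real N * g y)"
    proof -
      have fin: "finite (lbox L :: (int^'d) set)" by (rule finite_lbox)
      have "(\<Sum>u\<in>lbox L. complex_of_real (g u) * (if u = y then of_nat N else 0)) = (\<Sum>u\<in>lbox L. if u = y then complex_of_real (g y) * of_nat N else 0)"
        by (intro sum.cong) auto
      also have "\<dots> = complex_of_real (g y) * of_nat N" using y by (simp add: sum.delta[OF fin])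
      finally show ?thesis by (simp add: mult.commute)
    qed
    finally have c: "(\<Sum>p\<in>dual L. Dhat \<chi>\<^sub>0 \<phi> V \<beta> L p * cis (- pdot p y)) = complex_of_real (real N * g y)" .
    have "Re (\<Sum>p\<in>dual L. Dhat \<chi>\<^sub>0 \<phi> V \<beta> L p * cis (- pdot p y)) = (\<Sum>p\<in>dual L. Re (Dhat \<chi>\<^sub>0 \<phi> V \<beta> L p) * cos (pdot p y))"
      unfolding Re_sum by (intro sum.cong refl) (simp add: ImD)
    then show ?thesis unfolding c by simp
  qed
  define R where "R p = Re (Dhat \<chi>\<^sub>0 \<phi> V \<beta> L p)" for p
  define b where "b p = enn2real (Bh p)" for p
  define c where "c p = cos (pdot p (l - l'))" for p
  have cx: "cos (pdot p x) = c p" if p: "p \<in> dual L" for p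
  proof -
    have "\<And>j. (x$j - (l' - l)$j) mod (2 * int L) = 0" unfolding x_def shv_def
      by (simp add: red_mod0[of L "l'$j + - l$j" for j, simplified])
    from pdot_period[OF L p this] obtain n :: int where n: "pdot p x = pdot p (l' - l) + 2 * pi * real_of_int n" by blast
    have "pdot p (l' - l) = - pdot p (l - l')" unfolding pdot_def by (simp add: sum_negf[symmetric] algebra_simps)
    then have "cos (pdot p x) = cos (- pdot p (l - l'))" using n sin_cos_eq_iff by metis
    then show ?thesis unfolding c_def by simp
  qed
  have "real N * (g x - g 0) = (\<Sum>p\<in>dual L. R p * (c p - 1))"
  proof -
    have "real N * (g x - g 0) = (\<Sum>p\<in>dual L. R p * cos (pdot p x)) - (\<Sum>p\<in>dual L. R p * cos (pdot p 0))"
      using inv[OF x] inv[OF z] unfolding R_def by (simp add: algebra_simps)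
    also have "\<dots> = (\<Sum>p\<in>dual L. R p * (c p - 1))"
      by (simp add: sum_subtractf[symmetric] pdot_zero_right cx algebra_simps cong: sum.cong)
    finally show ?thesis .
  qed
  also have "\<dots> = (\<Sum>p\<in>dual L - {0}. R p * (c p - 1))"
    by (rule sum.mono_neutral_right) (auto simp: finite_dual c_def pdot_zero_left)
  also have "\<dots> \<ge> (\<Sum>p\<in>dual L - {0}. b p * (c p - 1))"
  proof (rule sum_mono)
    fix p :: "real^'d" assume p: "p \<in> dual L - {0}"
    have Rb: "R p \<le> b p"
    proof (cases "R p \<ge> 0")
      case True
      have "enn2real (ennreal (R p)) \<le> enn2real (Bh p)"
        using hyp p fin by (intro enn2real_mono) (auto simp: R_def)
      then show ?thesis using True unfolding b_def by simp
    next
      case False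
      then show ?thesis unfolding b_def using enn2real_nonneg[of "Bh p"] by linarith
    qed
    have "c p - 1 \<le> 0" unfolding c_def by simp
    then show "b p * (c p - 1) \<le> R p * (c p - 1)" using Rb by (intro mult_right_mono_neg) auto
  qed
  finally have key: "(\<Sum>p\<in>dual L - {0}. b p * (c p - 1)) \<le> real N * (g x - g 0)" .
  have Bll': "Bmat Bh L l l' = (\<Sum>p\<in>dual L - {0}. b p * c p) / real N"
    unfolding Bmat_def cardN b_def c_def by simp
  have Bll: "Bmat Bh L l l = (\<Sum>p\<in>dual L - {0}. b p) / real N"
    unfolding Bmat_def cardN b_def by (simp add: pdot_zero_right)
  have "Bmat Bh L l l' - Bmat Bh L l l = (\<Sum>p\<in>dual L - {0}. b p * (c p - 1)) / real N"
    unfolding Bll' Bll by (simp add: diff_divide_distrib[symmetric] sum_subtractf[symmetric] algebra_simps)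
  also have "\<dots> \<le> g x - g 0" using key N0 by (simp add: divide_le_eq mult.commute)
  finally show ?thesis using Dll Dll' unfolding D_def by simp
qed


theorem lemma3p1:
  fixes \<phi> :: "nat^'d \<Rightarrow> real" and V :: "real^'v \<Rightarrow> real"
    and \<chi>\<^sub>0 :: "(real \<Rightarrow> real^'v) measure" and Bh :: "real^'d \<Rightarrow> ennreal"
    and m a \<beta> A\<^sub>V B\<^sub>V r :: real
  assumes "m > 0" and "a > 0" and "\<beta> > 0"
    and "\<forall>k. \<phi> k \<ge> 0" and "\<phi> 0 = 0"
    and "(\<lambda>l::int^'d. \<phi> (\<chi> j. nat \<bar>l$j\<bar>)) summable_on UNIV"
    and "continuous_on UNIV V"
    and "\<forall>U x. orthogonal_transformation U \<longrightarrow> V (U x) = V x"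
    and "r > 1" and "A\<^sub>V > 0" and "\<forall>x. V x \<ge> A\<^sub>V * norm x powr (2 * r) + B\<^sub>V"
    and "periodic_gaussian \<chi>\<^sub>0 m a \<beta>"
    and "continuous_on cube Bh" and "\<forall>p\<in>cube. Bh p > 0"
    and "(\<integral>\<^sup>+ p\<in>cube. Bh p \<partial>lborel) < \<infinity>"
    and "\<forall>L\<ge>1. \<forall>p\<in>dual L - {0}. ennreal (Re (Dhat \<chi>\<^sub>0 \<phi> V \<beta> L p)) \<le> Bh p"
  shows "\<forall>L\<ge>1. (\<forall>p\<in>dual L - {0}. Bh p < \<infinity>) \<longrightarrow>
           (\<forall>l\<in>lbox L. \<forall>l'\<in>lbox L.
              Dmat \<chi>\<^sub>0 \<phi> V \<beta> L l l'
                \<ge> (Dmat \<chi>\<^sub>0 \<phi> V \<beta> L l l - Bmat Bh L l l) + Bmat Bh L l l')"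
  proof (intro allI impI ballI)
  fix L :: nat and l l' :: "int^'d"
  assume L: "L \<ge> 1" and fin: "\<forall>p\<in>dual L - {0}. Bh p < \<infinity>" and l: "l \<in> lbox L" and l': "l' \<in> lbox L"
  have pg: "prob_space \<chi>\<^sub>0" "sets \<chi>\<^sub>0 = sets (path_space \<beta>)"
    using assms(12) unfolding periodic_gaussian_def by auto
  have hyp: "\<forall>p\<in>dual L - {0}. ennreal (Re (Dhat \<chi>\<^sub>0 \<phi> V \<beta> L p)) \<le> Bh p"
    using assms(16) L by blast
  show "Dmat \<chi>\<^sub>0 \<phi> V \<beta> L l l' \<ge> (Dmat \<chi>\<^sub>0 \<phi> V \<beta> L l l - Bmat Bh L l l) + Bmat Bh L l l'"
    by (rule main_ineq[OF pg L hyp fin l l'])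
qed

end
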